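(* Let $V\subseteq\mathcal V$ be finite and $\mathcal E,\mathcal F\in\mathit{DProg}(V)$. Then (1) $\{\mathcal E\}\le_T^s\{\mathcal F\}$ iff $\mathcal E\le_T^e\mathcal F$; (2) $\{\mathcal E\}\le_P^s\{\mathcal F\}$ iff $\mathcal E\le_P^e\mathcal F$.
   Context: $\mathcal V$ is a countably infinite set of qubit variables; $\mathcal H_V=\bigotimes_{q\in V}\mathcal H_q$ for finite $V$. $\mathcal D(\mathcal H)$: partial density operators; $\mathcal P(\mathcal H)$: effects (positive operators with eigenvalues in $[0,1]$). $\mathit{DProg}(V)$: completely positive trace-nonincreasing super-operators on $\mathcal L(\mathcal H_V)$. Operators/super-operators on subsystems are implicitly extended by tensoring with identities. Effect-based: for finite $W$ and $M,N\in\mathcal P(\mathcal H_W)$, $\mathcal E\models_{tot}(M,N)$ iff for all finite $X\supseteq V\cup W$ and $\rho\in\mathcal D(\mathcal H_X)$, ${\rm tr}(M\rho)\le{\rm tr}(N\mathcal E(\rho))$; $\mathcal E\models_{par}(M,N)$ iff moreover-with-slack ${\rm tr}(M\rho)\le{\rm tr}(N\mathcal E(\rho))+{\rm tr}(\rho)-{\rm tr}(\mathcal E(\rho))$ for all such $X,\rho$. $\mathcal E\le_T^e\mathcal F$ (resp. $\le_P^e$) iff every $(M,N)$ (over all finite $W$) satisfied by $\mathcal E$ in the total (resp. partial) sense is satisfied by $\mathcal F$. Set-of-effects based: for a set of super-operators $\mathbb E$ and $\Theta,\Psi\subseteq\mathcal P(\mathcal H_W)$, let $\mathrm{Exp}_{dem}(\rho\models\Theta)=\inf_{M\in\Theta}{\rm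 tr}(M\rho)$ (equal to ${\rm tr}(\rho)$ if $\Theta=\emptyset$). $\mathbb E\models_{tot}(\Theta,\Psi)$ iff for all finite $X\supseteq V\cup W$ and $\rho\in\mathcal D(\mathcal H_X)$, $\mathrm{Exp}_{dem}(\rho\models\Theta)\le\inf_{\mathcal E\in\mathbb E}\mathrm{Exp}_{dem}(\mathcal E(\rho)\models\Psi)$; $\mathbb E\models_{par}(\Theta,\Psi)$ iff for all such $X,\rho$, $\mathrm{Exp}_{dem}(\rho\models\Theta)\le\inf_{\mathcal E\in\mathbb E}[\mathrm{Exp}_{dem}(\mathcal E(\rho)\models\Psi)+{\rm tr}(\rho)-{\rm tr}(\mathcal E(\rho))]$. $\mathbb E\le_T^s\mathbb F$ (resp. $\le_P^s$) iff for every finite $W$ and all $\Theta,\Psi\subseteq\mathcal P(\mathcal H_W)$, $\mathbb E\models_{tot}(\Theta,\Psi)$ implies $\mathbb F\models_{tot}(\Theta,\Psi)$ (resp. with $\models_{par}$). *)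

theory Defs
  imports Complex_Main
begin

(* Qubit variables: the countably infinite set \<V> is modelled by nat.
   A computational-basis vector of H_X (X finite) is an assignment
   a :: nat \<Rightarrow> bool with a q = False for q \<notin> X.
   An operator on H_X is a function basis \<Rightarrow> basis \<Rightarrow> complex
   (matrix entries), only its values on B X \<times> B X matter. *)

type_synonym qvar = nat
type_synonym basis = "qvar \<Rightarrow> bool"
type_synonym op = "basis \<Rightarrow> basis \<Rightarrow> complex"
type_synonym superop = "op \<Rightarrow> op"

definition B :: "qvar set \<Rightarrow> basis set" where
  "B X = {a. \<forall>q. q \<notin> X \<longrightarrow> \<not> a q}"

definition restr :: "basis \<Rightarrow> qvar set \<Rightarrow> basis" where
  "restr a W = (\<lambda>q. if q \<in> W then a q else False)"

definition merge :: "basis \<Rightarrow> basis \<Rightarrow> qvar set \<Rightarrow> basis" where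
  "merge a' a V = (\<lambda>q. if q \<in> V then a' q else a q)"

definition idop :: op where
  "idop = (\<lambda>a b. if a = b then 1 else 0)"

definition trace :: "qvar set \<Rightarrow> op \<Rightarrow> complex" where
  "trace X M = (\<Sum>a\<in>B X. M a a)"

definition mult :: "qvar set \<Rightarrow> op \<Rightarrow> op \<Rightarrow> op" where
  "mult X M N = (\<lambda>a c. \<Sum>b\<in>B X. M a b * N b c)"

(* M on H_W, implicitly extended to M \<otimes> I on any larger space *)
definition ext :: "qvar set \<Rightarrow> op \<Rightarrow> op" where
  "ext W M = (\<lambda>a b. if (\<forall>q. q \<notin> W \<longrightarrow> a q = b q)
                      then M (restr a W) (restr b W) else 0)"

(* super-operator E on L(H_V), implicitly extended to E \<otimes> id on L(H_X), X \<supseteq> V: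
   block-wise application to the blocks \<rho>_{cd} indexed by basis vectors c,d of H_{X-V} *)
definition sapp :: "qvar set \<Rightarrow> superop \<Rightarrow> op \<Rightarrow> op" where
  "sapp V E \<rho> = (\<lambda>a b. E (\<lambda>a' b'. \<rho> (merge a' a V) (merge b' b V)) (restr a V) (restr b V))"

definition positive :: "qvar set \<Rightarrow> op \<Rightarrow> bool" where
  "positive X M \<longleftrightarrow> (\<forall>\<psi> :: basis \<Rightarrow> complex.
     (let z = (\<Sum>a\<in>B X. \<Sum>b\<in>B X. cnj (\<psi> a) * M a b * \<psi> b) in Im z = 0 \<and> 0 \<le> Re z))"

definition density :: "qvar set \<Rightarrow> op \<Rightarrow> bool" where
  "density X \<rho> \<longleftrightarrow> positive X \<rho> \<and> Re (trace X \<rho>) \<le> 1"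

definition effect :: "qvar set \<Rightarrow> op \<Rightarrow> bool" where
  "effect W M \<longleftrightarrow> positive W M \<and> positive W (\<lambda>a b. idop a b - M a b)"

definition superop_on :: "qvar set \<Rightarrow> superop \<Rightarrow> bool" where
  "superop_on V E \<longleftrightarrow>
     (\<forall>M N. (\<forall>a\<in>B V. \<forall>b\<in>B V. M a b = N a b) \<longrightarrow> (\<forall>a\<in>B V. \<forall>b\<in>B V. E M a b = E N a b)) \<and>
     (\<forall>M N. \<forall>a\<in>B V. \<forall>b\<in>B V. E (\<lambda>x y. M x y + N x y) a b = E M a b + E N a b) \<and>
     (\<forall>c M. \<forall>a\<in>B V. \<forall>b\<in>B V. E (\<lambda>x y. c * M x y) a b = c * E M a b)"

(* DProg(V): completely positive, trace-nonincreasing super-operators on L(H_V) *)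
definition DProg :: "qvar set \<Rightarrow> superop set" where
  "DProg V = {E. superop_on V E \<and>
     (\<forall>X \<rho>. finite X \<and> V \<subseteq> X \<and> positive X \<rho> \<longrightarrow> positive X (sapp V E \<rho>)) \<and>
     (\<forall>\<rho>. positive V \<rho> \<longrightarrow> Re (trace V (E \<rho>)) \<le> Re (trace V \<rho>))}"

(* tr(M \<rho>) for M on H_W, \<rho> on H_X (real for positive M, \<rho>) *)
definition expv :: "qvar set \<Rightarrow> qvar set \<Rightarrow> op \<Rightarrow> op \<Rightarrow> real" where
  "expv X W M \<rho> = Re (trace X (mult X (ext W M) \<rho>))"

definition trr :: "qvar set \<Rightarrow> op \<Rightarrow> real" where
  "trr X \<rho> = Re (trace X \<rho>)"

definition sat_tot_e :: "qvar set \<Rightarrow> superop \<Rightarrow> qvar set \<Rightarrow> op \<Rightarrow> op \<Rightarrow> bool" where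
  "sat_tot_e V E W M N \<longleftrightarrow> (\<forall>X \<rho>. finite X \<and> V \<union> W \<subseteq> X \<and> density X \<rho> \<longrightarrow>
      expv X W M \<rho> \<le> expv X W N (sapp V E \<rho>))"

definition sat_par_e :: "qvar set \<Rightarrow> superop \<Rightarrow> qvar set \<Rightarrow> op \<Rightarrow> op \<Rightarrow> bool" where
  "sat_par_e V E W M N \<longleftrightarrow> (\<forall>X \<rho>. finite X \<and> V \<union> W \<subseteq> X \<and> density X \<rho> \<longrightarrow>
      expv X W M \<rho> \<le> expv X W N (sapp V E \<rho>) + trr X \<rho> - trr X (sapp V E \<rho>))"

definition le_T_e :: "qvar set \<Rightarrow> superop \<Rightarrow> superop \<Rightarrow> bool" where
  "le_T_e V E F \<longleftrightarrow> (\<forall>W M N. finite W \<and> effect W M \<and> effect W N \<longrightarrow>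
      sat_tot_e V E W M N \<longrightarrow> sat_tot_e V F W M N)"

definition le_P_e :: "qvar set \<Rightarrow> superop \<Rightarrow> superop \<Rightarrow> bool" where
  "le_P_e V E F \<longleftrightarrow> (\<forall>W M N. finite W \<and> effect W M \<and> effect W N \<longrightarrow>
      sat_par_e V E W M N \<longrightarrow> sat_par_e V F W M N)"

definition Exp_dem :: "qvar set \<Rightarrow> qvar set \<Rightarrow> op \<Rightarrow> op set \<Rightarrow> real" where
  "Exp_dem X W \<rho> \<Theta> = (if \<Theta> = {} then trr X \<rho> else (INF M\<in>\<Theta>. expv X W M \<rho>))"

definition sat_tot_s :: "qvar set \<Rightarrow> superop set \<Rightarrow> qvar set \<Rightarrow> op set \<Rightarrow> op set \<Rightarrow> bool" where
  "sat_tot_s V EE W \<Theta> \<Psi> \<longleftrightarrow> (\<forall>X \<rho>. finite X \<and> V \<union> W \<subseteq> X \<and> density X \<rho> \<longrightarrow>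
      Exp_dem X W \<rho> \<Theta> \<le> (INF E\<in>EE. Exp_dem X W (sapp V E \<rho>) \<Psi>))"

definition sat_par_s :: "qvar set \<Rightarrow> superop set \<Rightarrow> qvar set \<Rightarrow> op set \<Rightarrow> op set \<Rightarrow> bool" where
  "sat_par_s V EE W \<Theta> \<Psi> \<longleftrightarrow> (\<forall>X \<rho>. finite X \<and> V \<union> W \<subseteq> X \<and> density X \<rho> \<longrightarrow>
      Exp_dem X W \<rho> \<Theta> \<le> (INF E\<in>EE. Exp_dem X W (sapp V E \<rho>) \<Psi> + trr X \<rho> - trr X (sapp V E \<rho>)))"

definition le_T_s :: "qvar set \<Rightarrow> superop set \<Rightarrow> superop set \<Rightarrow> bool" where
  "le_T_s V EE FF \<longleftrightarrow> (\<forall>W \<Theta> \<Psi>. finite W \<and> \<Theta> \<subseteq> Collect (effect W) \<and> \<Psi> \<subseteq> Collect (effect W) \<longrightarrow>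
      sat_tot_s V EE W \<Theta> \<Psi> \<longrightarrow> sat_tot_s V FF W \<Theta> \<Psi>)"

definition le_P_s :: "qvar set \<Rightarrow> superop set \<Rightarrow> superop set \<Rightarrow> bool" where
  "le_P_s V EE FF \<longleftrightarrow> (\<forall>W \<Theta> \<Psi>. finite W \<and> \<Theta> \<subseteq> Collect (effect W) \<and> \<Psi> \<subseteq> Collect (effect W) \<longrightarrow>
      sat_par_s V EE W \<Theta> \<Psi> \<longrightarrow> sat_par_s V FF W \<Theta> \<Psi>)"

end

theory Submission imports Defs begin

lemma finite_B: "finite X \<Longrightarrow> finite (B X)"
proof -
  assume f: "finite X"
  have "B X \<subseteq> (\<lambda>S q. q \<in> S) ` Pow X"
  proof
    fix a assume "a \<in> B X"
    hence "a = (\<lambda>q. q \<in> {q. a q})" and "{q. a q} \<subseteq> X" by (auto simp: B_def)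
    thus "a \<in> (\<lambda>S q. q \<in> S) ` Pow X" by blast
  qed
  thus ?thesis using f by (meson finite_Pow_iff finite_imageI finite_subset)
qed

lemma restr_B[simp]: "restr a W \<in> B W"
  by (simp add: B_def restr_def)

lemma merge_B: "W \<subseteq> X \<Longrightarrow> a' \<in> B W \<Longrightarrow> c \<in> B (X - W) \<Longrightarrow> merge a' c W \<in> B X"
  by (auto simp: B_def merge_def)

lemma restr_merge1: "a' \<in> B W \<Longrightarrow> restr (merge a' c W) W = a'"
  by (auto simp: B_def merge_def restr_def fun_eq_iff)

lemma restr_merge2: "c \<in> B (X - W) \<Longrightarrow> restr (merge a' c W) (X - W) = c"
  by (auto simp: B_def merge_def restr_def fun_eq_iff)

lemma merge_restr: "a \<in> B X \<Longrightarrow> W \<subseteq> X \<Longrightarrow> merge (restr a W) (restr a (X - W)) W = a"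
  by (auto simp: B_def merge_def restr_def fun_eq_iff)

lemma sum_split:
  assumes "W \<subseteq> X"
  shows "(\<Sum>a\<in>B X. f a) = (\<Sum>c\<in>B (X - W). \<Sum>a'\<in>B W. f (merge a' c W))"
proof -
  have "(\<Sum>c\<in>B (X - W). \<Sum>a'\<in>B W. f (merge a' c W)) = (\<Sum>(c,a')\<in>B (X - W) \<times> B W. f (merge a' c W))"
    by (rule sum.cartesian_product)
  also have "\<dots> = (\<Sum>a\<in>B X. f a)"
    by (rule sum.reindex_bij_witness[where i="\<lambda>a. (restr a (X - W), restr a W)" and j="\<lambda>(c,a'). merge a' c W"])
       (use assms in \<open>auto simp: restr_merge1 restr_merge2 merge_restr merge_B\<close>)
  finally show ?thesis by simp
qed

lemma sum_fiber:
  assumes "W \<subseteq> X" "c \<in> B (X - W)" "finite X" "\<And>a. a \<in> B X \<Longrightarrow> restr a (X - W) \<noteq> c \<Longrightarrow> f a = 0"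
  shows "(\<Sum>a\<in>B X. f a) = (\<Sum>a'\<in>B W. f (merge a' c W))"
proof -
  have "(\<Sum>a\<in>B X. f a) = (\<Sum>d\<in>B (X - W). \<Sum>a'\<in>B W. f (merge a' d W))"
    by (rule sum_split[OF assms(1)])
  also have "\<dots> = (\<Sum>d\<in>B (X - W). if d = c then (\<Sum>a'\<in>B W. f (merge a' c W)) else 0)"
  proof (rule sum.cong[OF refl])
    fix d assume d: "d \<in> B (X - W)"
    show "(\<Sum>a'\<in>B W. f (merge a' d W)) = (if d = c then (\<Sum>a'\<in>B W. f (merge a' c W)) else 0)"
    proof (cases "d = c")
      case False
      have "f (merge a' d W) = 0" if "a' \<in> B W" for a'
        using assms(4)[of "merge a' d W"] that d False assms(1) by (simp add: restr_merge2 merge_B)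
      thus ?thesis using False by simp
    qed simp
  qed
  also have "\<dots> = (\<Sum>a'\<in>B W. f (merge a' c W))"
    using assms(2,3) by (simp add: sum.delta' finite_B)
  finally show ?thesis .
qed

lemma ext_merge:
  assumes "a \<in> B X" "W \<subseteq> X" "b' \<in> B W"
  shows "ext W K a (merge b' (restr a (X - W)) W) = K (restr a W) b'"
proof -
  have "\<forall>q. q \<notin> W \<longrightarrow> a q = merge b' (restr a (X - W)) W q"
    using assms by (auto simp: merge_def restr_def B_def)
  thus ?thesis using assms by (simp add: ext_def restr_merge1)
qed

lemma ext_zero:
  assumes "a \<in> B X" "b \<in> B X" "restr b (X - W) \<noteq> restr a (X - W)"
  shows "ext W K a b = 0"
proof -
  have "\<not> (\<forall>q. q \<notin> W \<longrightarrow> a q = b q)"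
  proof
    assume "\<forall>q. q \<notin> W \<longrightarrow> a q = b q"
    hence "restr b (X - W) = restr a (X - W)" by (auto simp: restr_def fun_eq_iff)
    thus False using assms(3) by simp
  qed
  thus ?thesis unfolding ext_def by (rule if_not_P)
qed

lemma ext_sum:
  assumes "W \<subseteq> X" "finite X"
  shows "(\<Sum>a\<in>B X. \<Sum>b\<in>B X. ext W K a b * h a b) =
    (\<Sum>c\<in>B (X - W). \<Sum>a'\<in>B W. \<Sum>b'\<in>B W. K a' b' * h (merge a' c W) (merge b' c W))"
proof -
  have "(\<Sum>a\<in>B X. \<Sum>b\<in>B X. ext W K a b * h a b) =
     (\<Sum>a\<in>B X. \<Sum>b'\<in>B W. K (restr a W) b' * h a (merge b' (restr a (X - W)) W))"
  proof (rule sum.cong[OF refl])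
    fix a assume a: "a \<in> B X"
    have "(\<Sum>b\<in>B X. ext W K a b * h a b) = (\<Sum>b'\<in>B W. ext W K a (merge b' (restr a (X - W)) W) * h a (merge b' (restr a (X - W)) W))"
      by (rule sum_fiber) (use assms a ext_zero in auto)
    also have "\<dots> = (\<Sum>b'\<in>B W. K (restr a W) b' * h a (merge b' (restr a (X - W)) W))"
      using a assms by (simp add: ext_merge)
    finally show "(\<Sum>b\<in>B X. ext W K a b * h a b) = (\<Sum>b'\<in>B W. K (restr a W) b' * h a (merge b' (restr a (X - W)) W))" .
  qed
  also have "\<dots> = (\<Sum>c\<in>B (X - W). \<Sum>a'\<in>B W. \<Sum>b'\<in>B W. K a' b' * h (merge a' c W) (merge b' c W))"
    by (subst sum_split[OF assms(1)]) (auto intro!: sum.cong simp: restr_merge1 restr_merge2)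
  finally show ?thesis .
qed

definition form :: "basis set \<Rightarrow> op \<Rightarrow> (basis \<Rightarrow> complex) \<Rightarrow> complex" where
  "form S M \<psi> = (\<Sum>a\<in>S. \<Sum>b\<in>S. cnj (\<psi> a) * M a b * \<psi> b)"

definition posS :: "basis set \<Rightarrow> op \<Rightarrow> bool" where
  "posS S M \<longleftrightarrow> (\<forall>\<psi>. Im (form S M \<psi>) = 0 \<and> 0 \<le> Re (form S M \<psi>))"

definition tr2 :: "basis set \<Rightarrow> op \<Rightarrow> op \<Rightarrow> complex" where
  "tr2 S K \<sigma> = (\<Sum>a\<in>S. \<Sum>b\<in>S. K a b * \<sigma> b a)"

definition ptr :: "qvar set \<Rightarrow> qvar set \<Rightarrow> op \<Rightarrow> op" where
  "ptr X W \<rho> = (\<lambda>u v. \<Sum>c\<in>B (X - W). \<rho> (merge u c W) (merge v c W))"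

lemma positive_iff: "positive X M = posS (B X) M"
  by (simp add: positive_def posS_def form_def Let_def)

lemma trace_mult: "trace X (mult X K \<sigma>) = tr2 (B X) K \<sigma>"
  by (simp add: trace_def mult_def tr2_def)

lemma nonneg_sum:
  assumes "\<And>c. c \<in> C \<Longrightarrow> Im (f c) = 0 \<and> 0 \<le> Re (f c)"
  shows "Im (\<Sum>c\<in>C. f c) = 0 \<and> 0 \<le> Re (\<Sum>c\<in>C. f c)"
  using assms by (simp add: Im_sum Re_sum sum_nonneg)

lemma tr2_ext:
  assumes "W \<subseteq> X" "finite X"
  shows "tr2 (B X) (ext W K) \<rho> = tr2 (B W) K (ptr X W \<rho>)"
proof -
  have "tr2 (B X) (ext W K) \<rho> = (\<Sum>c\<in>B (X - W). \<Sum>a'\<in>B W. \<Sum>b'\<in>B W. K a' b' * \<rho> (merge b' c W) (merge a' c W))"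
    unfolding tr2_def by (rule ext_sum[OF assms])
  also have "\<dots> = (\<Sum>a'\<in>B W. \<Sum>b'\<in>B W. \<Sum>c\<in>B (X - W). K a' b' * \<rho> (merge b' c W) (merge a' c W))"
    by (simp add: sum.swap[of _ "B (X - W)"])
  also have "\<dots> = tr2 (B W) K (ptr X W \<rho>)"
    by (simp add: tr2_def ptr_def sum_distrib_left)
  finally show ?thesis .
qed

lemma pos_ext:
  assumes "W \<subseteq> X" "finite X" "posS (B W) K"
  shows "posS (B X) (ext W K)"
  unfolding posS_def
proof
  fix \<psi>
  have "form (B X) (ext W K) \<psi> = (\<Sum>a\<in>B X. \<Sum>b\<in>B X. ext W K a b * (cnj (\<psi> a) * \<psi> b))"
    unfolding form_def by (simp add: ac_simps)
  also have "\<dots> = (\<Sum>c\<in>B (X - W). \<Sum>a'\<in>B W. \<Sum>b'\<in>B W. K a' b' * (cnj (\<psi> (merge a' c W)) * \<psi> (merge b' c W)))"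
    by (rule ext_sum[OF assms(1,2)])
  also have "\<dots> = (\<Sum>c\<in>B (X - W). form (B W) K (\<lambda>a'. \<psi> (merge a' c W)))"
    unfolding form_def by (simp add: ac_simps)
  moreover have "Im (\<Sum>c\<in>B (X - W). form (B W) K (\<lambda>a'. \<psi> (merge a' c W))) = 0 \<and>
      0 \<le> Re (\<Sum>c\<in>B (X - W). form (B W) K (\<lambda>a'. \<psi> (merge a' c W)))"
    by (rule nonneg_sum) (use assms(3) in \<open>simp add: posS_def\<close>)
  ultimately show "Im (form (B X) (ext W K) \<psi>) = 0 \<and> 0 \<le> Re (form (B X) (ext W K) \<psi>)"
    by simp
qed

lemma pos_compress:
  assumes "V \<subseteq> Y" "finite Y" "c \<in> B (Y - V)" "posS (B Y) \<rho>"
  shows "posS (B V) (\<lambda>x y. \<rho> (merge x c V) (merge y c V))"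
  unfolding posS_def
proof
  fix \<psi>
  define \<phi> :: "basis \<Rightarrow> complex" where "\<phi> a = (if restr a (Y - V) = c then \<psi> (restr a V) else 0)" for a
  have \<phi>m: "\<phi> (merge a' c V) = \<psi> a'" if "a' \<in> B V" for a'
    using that assms(3) by (simp add: \<phi>_def restr_merge1 restr_merge2)
  have "form (B Y) \<rho> \<phi> = (\<Sum>a'\<in>B V. \<Sum>b\<in>B Y. cnj (\<phi> (merge a' c V)) * \<rho> (merge a' c V) b * \<phi> b)"
    unfolding form_def by (rule sum_fiber) (use assms in \<open>auto simp: \<phi>_def\<close>)
  also have "\<dots> = (\<Sum>a'\<in>B V. \<Sum>b'\<in>B V. cnj (\<phi> (merge a' c V)) * \<rho> (merge a' c V) (merge b' c V) * \<phi> (merge b' c V))"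
    by (rule sum.cong[OF refl], rule sum_fiber) (use assms in \<open>auto simp: \<phi>_def\<close>)
  also have "\<dots> = form (B V) (\<lambda>x y. \<rho> (merge x c V) (merge y c V)) \<psi>"
    unfolding form_def by (simp add: \<phi>m)
  finally show "Im (form (B V) (\<lambda>x y. \<rho> (merge x c V) (merge y c V)) \<psi>) = 0 \<and>
      0 \<le> Re (form (B V) (\<lambda>x y. \<rho> (merge x c V) (merge y c V)) \<psi>)"
    using assms(4) unfolding posS_def by metis
qed

lemma form_supp:
  assumes "finite S" "T \<subseteq> S" "\<And>a. a \<in> S - T \<Longrightarrow> \<psi> a = 0"
  shows "form S M \<psi> = form T M \<psi>"
proof -
  have "form S M \<psi> = (\<Sum>a\<in>T. \<Sum>b\<in>S. cnj (\<psi> a) * M a b * \<psi> b)"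
    unfolding form_def by (rule sum.mono_neutral_right) (use assms in auto)
  also have "\<dots> = form T M \<psi>"
    unfolding form_def
    by (rule sum.cong[OF refl], rule sum.mono_neutral_right) (use assms in auto)
  finally show ?thesis .
qed

lemma posS_sub:
  assumes "finite S" "T \<subseteq> S" "posS S M"
  shows "posS T M"
  unfolding posS_def
proof
  fix \<psi> :: "basis \<Rightarrow> complex"
  define \<phi> :: "basis \<Rightarrow> complex" where "\<phi> a = (if a \<in> T then \<psi> a else 0)" for a
  have "form S M \<phi> = form T M \<phi>" by (rule form_supp) (use assms in \<open>auto simp: \<phi>_def\<close>)
  also have "\<dots> = form T M \<psi>" unfolding form_def by (auto simp: \<phi>_def intro!: sum.cong)
  finally show "Im (form T M \<psi>) = 0 \<and> 0 \<le> Re (form T M \<psi>)"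
    using assms(3) unfolding posS_def by metis
qed

lemma posS_diag:
  assumes "finite S" "posS S M" "x \<in> S"
  shows "Im (M x x) = 0 \<and> 0 \<le> Re (M x x)"
proof -
  define \<phi> :: "basis \<Rightarrow> complex" where "\<phi> a = (if a = x then 1 else 0)" for a
  have "form S M \<phi> = form {x} M \<phi>" by (rule form_supp) (use assms in \<open>auto simp: \<phi>_def\<close>)
  also have "\<dots> = M x x" by (simp add: form_def \<phi>_def)
  finally show ?thesis using assms(2) unfolding posS_def by metis
qed

lemma posS_herm:
  assumes "finite S" "posS S M" "x \<in> S" "y \<in> S"
  shows "M x y = cnj (M y x)"
proof (cases "x = y")
  case True
  thus ?thesis using posS_diag[OF assms(1,2,3)] by (simp add: complex_eq_iff)
next
  case False
  define \<phi>1 :: "basis \<Rightarrow> complex" where "\<phi>1 a = (if a = x then 1 else if a = y then 1 else 0)" for a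
  define \<phi>2 :: "basis \<Rightarrow> complex" where "\<phi>2 a = (if a = x then 1 else if a = y then \<i> else 0)" for a
  have "form S M \<phi>1 = form {x, y} M \<phi>1" by (rule form_supp) (use assms in \<open>auto simp: \<phi>1_def\<close>)
  also have "\<dots> = M x x + M x y + M y x + M y y" using False by (simp add: form_def \<phi>1_def)
  finally have 1: "Im (M x x + M x y + M y x + M y y) = 0" using assms(2) unfolding posS_def by metis
  have "form S M \<phi>2 = form {x, y} M \<phi>2" by (rule form_supp) (use assms in \<open>auto simp: \<phi>2_def\<close>)
  also have "\<dots> = M x x + \<i> * M x y - \<i> * M y x + M y y" using False by (simp add: form_def \<phi>2_def algebra_simps)
  finally have 2: "Im (M x x + \<i> * M x y - \<i> * M y x + M y y) = 0" using assms(2) unfolding posS_def by metis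
  have "Im (M x x) = 0" "Im (M y y) = 0" using posS_diag assms by auto
  thus ?thesis using 1 2 by (simp add: complex_eq_iff)
qed

lemma pivot:
  assumes fin: "finite S" and aS: "a \<notin> S"
  and IH: "\<And>K \<sigma>. posS S K \<Longrightarrow> posS S \<sigma> \<Longrightarrow> Im (tr2 S K \<sigma>) = 0 \<and> 0 \<le> Re (tr2 S K \<sigma>)"
  and K: "posS (insert a S) K" and \<sigma>: "posS (insert a S) \<sigma>"
  and dpos: "Im (\<sigma> a a) = 0" "0 < Re (\<sigma> a a)"
  shows "Im (tr2 (insert a S) K \<sigma>) = 0 \<and> 0 \<le> Re (tr2 (insert a S) K \<sigma>)"
proof -
  let ?S = "insert a S"
  define r where "r = Re (\<sigma> a a)"
  have d_real: "\<sigma> a a = complex_of_real r" using dpos by (simp add: r_def complex_eq_iff)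
  have rpos: "r > 0" using dpos by (simp add: r_def)
  have fin2: "finite ?S" using fin by simp
  have herm: "\<And>x y. x \<in> ?S \<Longrightarrow> y \<in> ?S \<Longrightarrow> \<sigma> x y = cnj (\<sigma> y x)"
    using posS_herm[OF fin2 \<sigma>] by blast
  define \<sigma>' where "\<sigma>' x y = \<sigma> x y - \<sigma> x a * \<sigma> a y / complex_of_real r" for x y
  have pos': "posS S \<sigma>'"
    unfolding posS_def
  proof
    fix \<psi> :: "basis \<Rightarrow> complex"
    define t where "t = (\<Sum>y\<in>S. \<sigma> a y * \<psi> y)"
    define \<phi> where "\<phi> = \<psi>(a := - t / complex_of_real r)"
    have \<phi>S: "\<And>y. y \<in> S \<Longrightarrow> \<phi> y = \<psi> y" using aS by (auto simp: \<phi>_def)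
    have \<phi>a: "\<phi> a = - t / complex_of_real r" by (simp add: \<phi>_def)
    have s: "(\<Sum>x\<in>S. cnj (\<psi> x) * \<sigma> x a) = cnj t"
      unfolding t_def cnj_sum by (rule sum.cong[OF refl]) (simp add: herm[of _ a])
    let ?Q = "\<Sum>x\<in>S. \<Sum>y\<in>S. cnj (\<psi> x) * \<sigma> x y * \<psi> y"
    have "form ?S \<sigma> \<phi> = (cnj (\<phi> a) * \<sigma> a a * \<phi> a + (\<Sum>y\<in>S. cnj (\<phi> a) * \<sigma> a y * \<phi> y)) +
        ((\<Sum>x\<in>S. cnj (\<phi> x) * \<sigma> x a * \<phi> a) + (\<Sum>x\<in>S. \<Sum>y\<in>S. cnj (\<phi> x) * \<sigma> x y * \<phi> y))"
      unfolding form_def using fin aS by (simp add: sum.distrib)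
    also have "\<dots> = (cnj (\<phi> a) * \<sigma> a a * \<phi> a + cnj (\<phi> a) * t) + (cnj t * \<phi> a + ?Q)"
    proof -
      have "(\<Sum>y\<in>S. cnj (\<phi> a) * \<sigma> a y * \<phi> y) = cnj (\<phi> a) * t"
        unfolding t_def sum_distrib_left by (rule sum.cong[OF refl]) (simp add: \<phi>S mult.assoc)
      moreover have "(\<Sum>x\<in>S. cnj (\<phi> x) * \<sigma> x a * \<phi> a) = cnj t * \<phi> a"
        unfolding s[symmetric] sum_distrib_right by (rule sum.cong[OF refl]) (simp add: \<phi>S)
      moreover have "(\<Sum>x\<in>S. \<Sum>y\<in>S. cnj (\<phi> x) * \<sigma> x y * \<phi> y) = ?Q"
        by (rule sum.cong[OF refl], rule sum.cong[OF refl]) (simp add: \<phi>S)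
      ultimately show ?thesis by simp
    qed
    also have "\<dots> = ?Q - cnj t * t / complex_of_real r"
      unfolding \<phi>a d_real using rpos by (simp add: field_simps)
    also have "\<dots> = form S \<sigma>' \<psi>"
    proof -
      have "form S \<sigma>' \<psi> = ?Q - (\<Sum>x\<in>S. \<Sum>y\<in>S. (cnj (\<psi> x) * \<sigma> x a) * (\<sigma> a y * \<psi> y) / complex_of_real r)"
        unfolding form_def \<sigma>'_def by (simp add: sum_subtractf[symmetric] algebra_simps)
      also have "\<dots> = ?Q - (\<Sum>x\<in>S. cnj (\<psi> x) * \<sigma> x a) * (\<Sum>y\<in>S. \<sigma> a y * \<psi> y) / complex_of_real r"
        by (simp add: sum_product sum_divide_distrib)
      also have "\<dots> = ?Q - cnj t * t / complex_of_real r"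
        by (simp only: s t_def)
      finally show ?thesis by simp
    qed
    finally have eq: "form ?S \<sigma> \<phi> = form S \<sigma>' \<psi>" .
    show "Im (form S \<sigma>' \<psi>) = 0 \<and> 0 \<le> Re (form S \<sigma>' \<psi>)"
      using \<sigma> unfolding posS_def eq[symmetric] by metis
  qed
  define u where "u y = \<sigma> y a" for y
  have tr_split: "tr2 ?S K \<sigma> = form ?S K u / complex_of_real r + tr2 ?S K \<sigma>'"
  proof -
    have "tr2 ?S K \<sigma> = (\<Sum>x\<in>?S. \<Sum>y\<in>?S. cnj (u x) * K x y * u y / complex_of_real r + K x y * \<sigma>' y x)"
      unfolding tr2_def
    proof (rule sum.cong[OF refl], rule sum.cong[OF refl])
      fix x y assume x: "x \<in> ?S" and y: "y \<in> ?S"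
      have "cnj (u x) = \<sigma> a x" using herm[OF _ x, of a] by (simp add: u_def)
      thus "K x y * \<sigma> y x = cnj (u x) * K x y * u y / complex_of_real r + K x y * \<sigma>' y x"
        using rpos by (simp add: u_def \<sigma>'_def field_simps)
    qed
    also have "\<dots> = form ?S K u / complex_of_real r + tr2 ?S K \<sigma>'"
      unfolding form_def tr2_def by (simp add: sum.distrib sum_divide_distrib)
    finally show ?thesis .
  qed
  have z1: "\<sigma>' a x = 0" for x using rpos by (simp add: \<sigma>'_def d_real)
  have z2: "\<sigma>' y a = 0" for y using rpos by (simp add: \<sigma>'_def d_real)
  have tr_S: "tr2 ?S K \<sigma>' = tr2 S K \<sigma>'"
    unfolding tr2_def using fin aS by (simp add: z1 z2)
  have KS: "posS S K" by (rule posS_sub[OF fin2 _ K]) auto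
  have A: "Im (tr2 S K \<sigma>') = 0 \<and> 0 \<le> Re (tr2 S K \<sigma>')" by (rule IH[OF KS pos'])
  have Bf: "Im (form ?S K u) = 0 \<and> 0 \<le> Re (form ?S K u)" using K unfolding posS_def by metis
  show ?thesis unfolding tr_split tr_S using A Bf rpos
    by (simp add: Re_divide_of_real Im_divide_of_real)
qed

lemma idop_sum: "finite S \<Longrightarrow> x \<in> S \<Longrightarrow> (\<Sum>y\<in>S. f y * idop x y * g y) = f x * g x"
proof -
  assume "finite S" "x \<in> S"
  have "(\<Sum>y\<in>S. f y * idop x y * g y) = (\<Sum>y\<in>S. if x = y then f x * g x else 0)"
    by (rule sum.cong) (auto simp: idop_def)
  thus ?thesis using \<open>finite S\<close> \<open>x \<in> S\<close> by simp
qed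

lemma idop_sum2: "finite S \<Longrightarrow> x \<in> S \<Longrightarrow> (\<Sum>y\<in>S. f y * idop y x) = f x"
proof -
  assume "finite S" "x \<in> S"
  have "(\<Sum>y\<in>S. f y * idop y x) = (\<Sum>y\<in>S. if x = y then f x else 0)"
    by (rule sum.cong) (auto simp: idop_def)
  thus ?thesis using \<open>finite S\<close> \<open>x \<in> S\<close> by simp
qed

lemma cnj_mult_self: "Im (cnj z * z) = 0 \<and> 0 \<le> Re (cnj z * z)"
  by simp

lemma neg_div_aux: "(x::real) < 0 \<Longrightarrow> 0 \<le> c \<Longrightarrow> x / (c + 1) < 0"
  by (simp add: divide_neg_pos)

lemma psd_trace:
  "finite S \<Longrightarrow> posS S K \<Longrightarrow> posS S \<sigma> \<Longrightarrow> Im (tr2 S K \<sigma>) = 0 \<and> 0 \<le> Re (tr2 S K \<sigma>)"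
proof (induction S arbitrary: K \<sigma> rule: finite_induct)
  case empty
  then show ?case by (simp add: tr2_def)
next
  case (insert a S)
  let ?S = "insert a S"
  have fin2: "finite ?S" using insert by simp
  let ?T = "\<Sum>x\<in>?S. K x x"
  have T: "Im ?T = 0 \<and> 0 \<le> Re ?T"
    by (rule nonneg_sum) (use posS_diag[OF fin2 insert.prems(1)] in auto)
  have main: "Im (tr2 ?S K \<sigma> + complex_of_real e * ?T) = 0 \<and> 0 \<le> Re (tr2 ?S K \<sigma> + complex_of_real e * ?T)"
    if e: "e > 0" for e
  proof -
    define \<sigma>e where "\<sigma>e x y = \<sigma> x y + complex_of_real e * idop x y" for x y
    have pe: "posS ?S \<sigma>e"
      unfolding posS_def
    proof
      fix \<psi> :: "basis \<Rightarrow> complex"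
      have "form ?S \<sigma>e \<psi> = form ?S \<sigma> \<psi> + complex_of_real e * (\<Sum>x\<in>?S. cnj (\<psi> x) * \<psi> x)"
      proof -
        have "form ?S \<sigma>e \<psi> = form ?S \<sigma> \<psi> + complex_of_real e * (\<Sum>x\<in>?S. \<Sum>y\<in>?S. cnj (\<psi> x) * idop x y * \<psi> y)"
          unfolding form_def \<sigma>e_def by (simp add: algebra_simps sum.distrib sum_distrib_left)
        also have "(\<Sum>x\<in>?S. \<Sum>y\<in>?S. cnj (\<psi> x) * idop x y * \<psi> y) = (\<Sum>x\<in>?S. cnj (\<psi> x) * \<psi> x)"
          by (rule sum.cong[OF refl]) (simp add: idop_sum[OF fin2])
        finally show ?thesis .
      qed
      moreover have "Im (\<Sum>x\<in>?S. cnj (\<psi> x) * \<psi> x) = 0 \<and> 0 \<le> Re (\<Sum>x\<in>?S. cnj (\<psi> x) * \<psi> x)"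
        by (rule nonneg_sum) (rule cnj_mult_self)
      moreover have "Im (form ?S \<sigma> \<psi>) = 0 \<and> 0 \<le> Re (form ?S \<sigma> \<psi>)"
        using insert.prems(2) unfolding posS_def by metis
      ultimately show "Im (form ?S \<sigma>e \<psi>) = 0 \<and> 0 \<le> Re (form ?S \<sigma>e \<psi>)"
        using e by simp
    qed
    have da: "Im (\<sigma> a a) = 0 \<and> 0 \<le> Re (\<sigma> a a)" using posS_diag[OF fin2 insert.prems(2)] by simp
    have "Im (tr2 ?S K \<sigma>e) = 0 \<and> 0 \<le> Re (tr2 ?S K \<sigma>e)"
      by (rule pivot[OF insert.hyps(1,2) insert.IH insert.prems(1) pe])
         (use da e in \<open>auto simp: \<sigma>e_def idop_def\<close>)
    moreover have "tr2 ?S K \<sigma>e = tr2 ?S K \<sigma> + complex_of_real e * ?T"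
    proof -
      have "tr2 ?S K \<sigma>e = tr2 ?S K \<sigma> + complex_of_real e * (\<Sum>x\<in>?S. \<Sum>y\<in>?S. K x y * idop y x)"
        unfolding tr2_def \<sigma>e_def by (simp add: algebra_simps sum.distrib sum_distrib_left)
      also have "(\<Sum>x\<in>?S. \<Sum>y\<in>?S. K x y * idop y x) = ?T"
        by (rule sum.cong[OF refl]) (simp add: idop_sum2[OF fin2])
      finally show ?thesis .
    qed
    ultimately show ?thesis by simp
  qed
  have im: "Im (tr2 ?S K \<sigma>) = 0" using main[of 1] T by simp
  have re: "0 \<le> Re (tr2 ?S K \<sigma>)"
  proof (rule ccontr)
    assume neg: "\<not> 0 \<le> Re (tr2 ?S K \<sigma>)"
    define x where "x = Re (tr2 ?S K \<sigma>)"
    define c where "c = Re ?T"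
    have c0: "c \<ge> 0" using T by (simp add: c_def)
    have x0: "x < 0" using neg by (simp add: x_def)
    define e where "e = - x / (c + 1)"
    have e0: "e > 0" unfolding e_def using x0 c0 by (intro divide_pos_pos) auto
    have "0 \<le> x + e * c" using main[OF e0] by (simp add: x_def c_def)
    moreover have "x + e * c = x / (c + 1)" using c0 by (simp add: e_def field_simps)
    moreover have "x / (c + 1) < 0" using x0 c0 by (rule neg_div_aux)
    ultimately show False by simp
  qed
  show ?case using im re by simp
qed

lemma so_add: "superop_on V E \<Longrightarrow> a \<in> B V \<Longrightarrow> b \<in> B V \<Longrightarrow> E (\<lambda>x y. M x y + N x y) a b = E M a b + E N a b"
  unfolding superop_on_def by blast

lemma so_scale: "superop_on V E \<Longrightarrow> a \<in> B V \<Longrightarrow> b \<in> B V \<Longrightarrow> E (\<lambda>x y. c * M x y) a b = c * E M a b"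
  unfolding superop_on_def by blast

lemma so_local: "superop_on V E \<Longrightarrow> (\<forall>a\<in>B V. \<forall>b\<in>B V. M a b = N a b) \<Longrightarrow> a \<in> B V \<Longrightarrow> b \<in> B V \<Longrightarrow> E M a b = E N a b"
  unfolding superop_on_def by blast

lemma E_zero:
  assumes "superop_on V E" "a \<in> B V" "b \<in> B V"
  shows "E (\<lambda>x y. 0) a b = 0"
proof -
  have "E (\<lambda>x y. 0 * (\<lambda>x y. 0) x y) a b = 0 * E (\<lambda>x y. 0) a b"
    by (rule so_scale[OF assms])
  thus ?thesis by simp
qed

lemma E_sum:
  assumes "superop_on V E" "a \<in> B V" "b \<in> B V" "finite I"
  shows "E (\<lambda>x y. \<Sum>i\<in>I. f i x y) a b = (\<Sum>i\<in>I. E (f i) a b)"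
  using assms(4)
proof (induction I rule: finite_induct)
  case empty
  then show ?case using E_zero[OF assms(1-3)] by simp
next
  case (insert i I)
  have "E (\<lambda>x y. \<Sum>i\<in>insert i I. f i x y) a b = E (\<lambda>x y. f i x y + (\<lambda>x y. \<Sum>i\<in>I. f i x y) x y) a b"
    using insert by simp
  also have "\<dots> = E (f i) a b + E (\<lambda>x y. \<Sum>i\<in>I. f i x y) a b"
    by (rule so_add[OF assms(1-3)])
  finally show ?case using insert by simp
qed

lemma E_lin:
  assumes "superop_on V E" "a \<in> B V" "b \<in> B V" "finite I"
  shows "E (\<lambda>x y. \<Sum>i\<in>I. c i * f i x y) a b = (\<Sum>i\<in>I. c i * E (f i) a b)"
proof -
  have "E (\<lambda>x y. \<Sum>i\<in>I. c i * f i x y) a b = (\<Sum>i\<in>I. E (\<lambda>x y. c i * f i x y) a b)"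
    by (rule E_sum[OF assms])
  also have "\<dots> = (\<Sum>i\<in>I. c i * E (f i) a b)"
    by (rule sum.cong[OF refl]) (rule so_scale[OF assms(1-3)])
  finally show ?thesis .
qed

lemma sapp_lin:
  assumes "superop_on V E" "finite I"
  shows "sapp V E (\<lambda>u v. \<Sum>i\<in>I. c i * R i u v) b a = (\<Sum>i\<in>I. c i * sapp V E (R i) b a)"
  unfolding sapp_def by (rule E_lin[OF assms(1) restr_B restr_B assms(2)])

lemma sapp_local:
  assumes "superop_on V E" "V \<subseteq> Y" "\<And>u v. u \<in> B Y \<Longrightarrow> v \<in> B Y \<Longrightarrow> \<rho> u v = \<rho>' u v"
    "a \<in> B Y" "b \<in> B Y"
  shows "sapp V E \<rho> a b = sapp V E \<rho>' a b"
proof -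
  have m: "merge a' c V \<in> B Y" if "a' \<in> B V" "c \<in> B Y" for a' c
    using that assms(2) by (auto simp: B_def merge_def)
  have "\<forall>x\<in>B V. \<forall>y\<in>B V. \<rho> (merge x a V) (merge y b V) = \<rho>' (merge x a V) (merge y b V)"
    using assms(3-5) m by blast
  thus ?thesis unfolding sapp_def by (rule so_local[OF assms(1) _ restr_B restr_B])
qed

lemma restr_merge_sub: "V \<subseteq> W \<Longrightarrow> restr (merge u c W) V = restr u V"
  by (auto simp: restr_def merge_def fun_eq_iff)

lemma merge_merge_sub: "V \<subseteq> W \<Longrightarrow> merge a' (merge u c W) V = merge (merge a' u V) c W"
  by (auto simp: merge_def fun_eq_iff)

lemma ptr_sapp:
  assumes "superop_on V E" "V \<subseteq> W" "finite X"
  shows "ptr X W (sapp V E \<rho>) u v = sapp V E (ptr X W \<rho>) u v"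
proof -
  have "ptr X W (sapp V E \<rho>) u v = (\<Sum>c\<in>B (X - W). E (\<lambda>a' b'. \<rho> (merge (merge a' u V) c W) (merge (merge b' v V) c W)) (restr u V) (restr v V))"
    unfolding ptr_def sapp_def using assms(2) by (simp add: restr_merge_sub merge_merge_sub)
  also have "\<dots> = sapp V E (ptr X W \<rho>) u v"
    unfolding sapp_def ptr_def
    by (rule E_sum[symmetric, OF assms(1) restr_B restr_B]) (simp add: finite_B assms(3))
  finally show ?thesis .
qed

definition ketbra :: "basis \<Rightarrow> basis \<Rightarrow> op" where
  "ketbra y x = (\<lambda>u v. if u = y \<and> v = x then 1 else 0)"

definition adj :: "qvar set \<Rightarrow> superop \<Rightarrow> qvar set \<Rightarrow> op \<Rightarrow> op" where
  "adj V E W K = (\<lambda>x y. tr2 (B W) K (sapp V E (ketbra y x)))"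

lemma adj_tr:
  assumes "finite W" "V \<subseteq> W" "superop_on V E"
  shows "tr2 (B W) K (sapp V E \<rho>) = tr2 (B W) (adj V E W K) \<rho>"
proof -
  let ?I = "B W \<times> B W"
  have finI: "finite ?I" using assms(1) by (simp add: finite_B)
  have decomp: "(\<Sum>p\<in>?I. \<rho> (snd p) (fst p) * ketbra (snd p) (fst p) u v) = \<rho> u v"
    if "u \<in> B W" "v \<in> B W" for u v
  proof -
    have "(\<Sum>p\<in>?I. \<rho> (snd p) (fst p) * ketbra (snd p) (fst p) u v) = (\<Sum>p\<in>?I. if (v, u) = p then \<rho> u v else 0)"
      by (rule sum.cong) (auto simp: ketbra_def)
    thus ?thesis using that finI by simp
  qed
  have s: "sapp V E \<rho> b a = (\<Sum>p\<in>?I. \<rho> (snd p) (fst p) * sapp V E (ketbra (snd p) (fst p)) b a)"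
    if "a \<in> B W" "b \<in> B W" for a b
  proof -
    have "sapp V E \<rho> b a = sapp V E (\<lambda>u v. \<Sum>p\<in>?I. \<rho> (snd p) (fst p) * ketbra (snd p) (fst p) u v) b a"
      by (rule sapp_local[OF assms(3) assms(2)]) (use decomp that in auto)
    also have "\<dots> = (\<Sum>p\<in>?I. \<rho> (snd p) (fst p) * sapp V E (ketbra (snd p) (fst p)) b a)"
      by (rule sapp_lin[OF assms(3) finI])
    finally show ?thesis .
  qed
  have "tr2 (B W) K (sapp V E \<rho>) = (\<Sum>a\<in>B W. \<Sum>b\<in>B W. K a b * (\<Sum>p\<in>?I. \<rho> (snd p) (fst p) * sapp V E (ketbra (snd p) (fst p)) b a))"
    unfolding tr2_def by (simp add: s)
  also have "\<dots> = (\<Sum>a\<in>B W. \<Sum>b\<in>B W. \<Sum>p\<in>?I. \<rho> (snd p) (fst p) * (K a b * sapp V E (ketbra (snd p) (fst p)) b a))"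
    by (simp add: sum_distrib_left mult.left_commute)
  also have "\<dots> = (\<Sum>a\<in>B W. \<Sum>p\<in>?I. \<Sum>b\<in>B W. \<rho> (snd p) (fst p) * (K a b * sapp V E (ketbra (snd p) (fst p)) b a))"
    by (rule sum.cong[OF refl], rule sum.swap)
  also have "\<dots> = (\<Sum>p\<in>?I. \<Sum>a\<in>B W. \<Sum>b\<in>B W. \<rho> (snd p) (fst p) * (K a b * sapp V E (ketbra (snd p) (fst p)) b a))"
    by (rule sum.swap)
  also have "\<dots> = (\<Sum>p\<in>?I. \<rho> (snd p) (fst p) * (\<Sum>a\<in>B W. \<Sum>b\<in>B W. K a b * sapp V E (ketbra (snd p) (fst p)) b a))"
    by (simp add: sum_distrib_left)
  also have "\<dots> = (\<Sum>p\<in>?I. adj V E W K (fst p) (snd p) * \<rho> (snd p) (fst p))"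
    by (simp add: adj_def tr2_def mult.commute)
  also have "\<dots> = tr2 (B W) (adj V E W K) \<rho>"
    unfolding tr2_def by (simp add: sum.cartesian_product split_def)
  finally show ?thesis .
qed

lemma DProg_D:
  assumes "E \<in> DProg V"
  shows "superop_on V E"
    and "\<And>X \<rho>. finite X \<Longrightarrow> V \<subseteq> X \<Longrightarrow> posS (B X) \<rho> \<Longrightarrow> posS (B X) (sapp V E \<rho>)"
    and "\<And>\<rho>. posS (B V) \<rho> \<Longrightarrow> Re (trace V (E \<rho>)) \<le> Re (trace V \<rho>)"
  using assms unfolding DProg_def positive_iff by blast+

lemma merge_merge_same: "merge x (merge a' c V) V = merge x c V"
  by (auto simp: merge_def fun_eq_iff)

lemma sapp_trace_le:
  assumes "E \<in> DProg V" "finite Y" "V \<subseteq> Y" "posS (B Y) \<rho>"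
  shows "Re (\<Sum>a\<in>B Y. sapp V E \<rho> a a) \<le> Re (\<Sum>a\<in>B Y. \<rho> a a)"
proof -
  define blk where "blk c = (\<lambda>x y. \<rho> (merge x c V) (merge y c V))" for c
  have "(\<Sum>a\<in>B Y. sapp V E \<rho> a a) = (\<Sum>c\<in>B (Y - V). \<Sum>a'\<in>B V. sapp V E \<rho> (merge a' c V) (merge a' c V))"
    by (rule sum_split[OF assms(3)])
  also have "\<dots> = (\<Sum>c\<in>B (Y - V). trace V (E (blk c)))"
    unfolding trace_def sapp_def blk_def
    by (rule sum.cong[OF refl], rule sum.cong[OF refl]) (simp add: merge_merge_same restr_merge1)
  finally have 1: "(\<Sum>a\<in>B Y. sapp V E \<rho> a a) = (\<Sum>c\<in>B (Y - V). trace V (E (blk c)))" .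
  have "(\<Sum>a\<in>B Y. \<rho> a a) = (\<Sum>c\<in>B (Y - V). \<Sum>a'\<in>B V. \<rho> (merge a' c V) (merge a' c V))"
    by (rule sum_split[OF assms(3)])
  also have "\<dots> = (\<Sum>c\<in>B (Y - V). trace V (blk c))"
    unfolding trace_def blk_def by simp
  finally have 2: "(\<Sum>a\<in>B Y. \<rho> a a) = (\<Sum>c\<in>B (Y - V). trace V (blk c))" .
  have "Re (trace V (E (blk c))) \<le> Re (trace V (blk c))" if "c \<in> B (Y - V)" for c
    by (rule DProg_D(3)[OF assms(1)]) (unfold blk_def, rule pos_compress[OF assms(3,2) that assms(4)])
  thus ?thesis unfolding 1 2 Re_sum by (rule sum_mono)
qed

lemma form_minus: "form S (\<lambda>x y. M x y - N x y) \<psi> = form S M \<psi> - form S N \<psi>"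
  unfolding form_def by (simp add: algebra_simps sum_subtractf)

lemma form_idop: "finite S \<Longrightarrow> form S idop \<psi> = (\<Sum>x\<in>S. cnj (\<psi> x) * \<psi> x)"
  unfolding form_def by (rule sum.cong[OF refl]) (simp add: idop_sum)

lemma tr2_minus: "tr2 S (\<lambda>x y. M x y - N x y) \<sigma> = tr2 S M \<sigma> - tr2 S N \<sigma>"
  unfolding tr2_def by (simp add: algebra_simps sum_subtractf)

lemma idop_sum3: "finite S \<Longrightarrow> x \<in> S \<Longrightarrow> (\<Sum>y\<in>S. idop x y * g y) = g x"
proof -
  assume "finite S" "x \<in> S"
  have "(\<Sum>y\<in>S. idop x y * g y) = (\<Sum>y\<in>S. if x = y then g x else 0)"
    by (rule sum.cong) (auto simp: idop_def)
  thus ?thesis using \<open>finite S\<close> \<open>x \<in> S\<close> by simp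
qed

lemma tr2_idop: "finite S \<Longrightarrow> tr2 S idop \<sigma> = (\<Sum>x\<in>S. \<sigma> x x)"
  unfolding tr2_def by (rule sum.cong[OF refl]) (simp add: idop_sum3)

lemma cnj_mult_self2: "Im (z * cnj z) = 0 \<and> 0 \<le> Re (z * cnj z)"
  by simp

lemma posS_idop: "finite S \<Longrightarrow> posS S idop"
  unfolding posS_def form_idop by (intro allI nonneg_sum cnj_mult_self)

lemma cplx_aux: "(a::complex) - (b - c) = (a - b) + c"
  by simp

lemma combine_aux:
  assumes "x = (a - b) + c" "Im a = 0" "Im b = 0" "Re b \<le> Re a" "Im c = 0 \<and> 0 \<le> Re c"
  shows "Im x = 0 \<and> 0 \<le> Re x"
  using assms by simp

lemma adj_effect:
  assumes "finite W" "V \<subseteq> W" "E \<in> DProg V" "effect W K"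
  shows "effect W (adj V E W K)"
proof -
  have so: "superop_on V E" by (rule DProg_D(1)[OF assms(3)])
  have finB: "finite (B W)" using assms(1) by (simp add: finite_B)
  have K1: "posS (B W) K" using assms(4) unfolding effect_def positive_iff by (rule conjunct1)
  have K2: "posS (B W) (\<lambda>a b. idop a b - K a b)" using assms(4) unfolding effect_def positive_iff by (rule conjunct2)
  fix \<psi> :: "basis \<Rightarrow> complex"
  define \<rho>\<psi> where "\<rho>\<psi> \<psi> = (\<lambda>u v. \<psi> u * cnj (\<psi> v))" for \<psi> :: "basis \<Rightarrow> complex"
  have pos\<rho>: "posS (B W) (\<rho>\<psi> \<psi>)" for \<psi>
    unfolding posS_def
  proof
    fix \<phi> :: "basis \<Rightarrow> complex"
    have "(\<Sum>a\<in>B W. cnj (\<phi> a) * \<psi> a) * cnj (\<Sum>a\<in>B W. cnj (\<phi> a) * \<psi> a) =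
        (\<Sum>a\<in>B W. cnj (\<phi> a) * \<psi> a) * (\<Sum>b\<in>B W. cnj (\<psi> b) * \<phi> b)"
      by (simp add: cnj_sum mult.commute)
    also have "\<dots> = (\<Sum>a\<in>B W. \<Sum>b\<in>B W. (cnj (\<phi> a) * \<psi> a) * (cnj (\<psi> b) * \<phi> b))"
      by (rule sum_product)
    also have "\<dots> = form (B W) (\<rho>\<psi> \<psi>) \<phi>"
      unfolding form_def \<rho>\<psi>_def by (rule sum.cong[OF refl], rule sum.cong[OF refl]) (simp add: ac_simps)
    finally have "form (B W) (\<rho>\<psi> \<psi>) \<phi> = (\<Sum>a\<in>B W. cnj (\<phi> a) * \<psi> a) * cnj (\<Sum>a\<in>B W. cnj (\<phi> a) * \<psi> a)"
      by simp
    thus "Im (form (B W) (\<rho>\<psi> \<psi>) \<phi>) = 0 \<and> 0 \<le> Re (form (B W) (\<rho>\<psi> \<psi>) \<phi>)"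
      by (simp only: cnj_mult_self2)
  qed
  have formadj: "form (B W) (adj V E W K) \<psi> = tr2 (B W) K (sapp V E (\<rho>\<psi> \<psi>))" for \<psi>
  proof -
    have "form (B W) (adj V E W K) \<psi> = tr2 (B W) (adj V E W K) (\<rho>\<psi> \<psi>)"
      unfolding form_def tr2_def \<rho>\<psi>_def
      by (rule sum.cong[OF refl], rule sum.cong[OF refl]) (simp only: mult.assoc mult.commute mult.left_commute)
    also have "\<dots> = tr2 (B W) K (sapp V E (\<rho>\<psi> \<psi>))"
      by (rule adj_tr[symmetric, OF assms(1,2) so])
    finally show ?thesis .
  qed
  have possig: "posS (B W) (sapp V E (\<rho>\<psi> \<psi>))" for \<psi>
    by (rule DProg_D(2)[OF assms(3) assms(1,2) pos\<rho>])
  have P1: "posS (B W) (adj V E W K)"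
    unfolding posS_def formadj by (intro allI psd_trace[OF finB K1 possig])
  have P2: "posS (B W) (\<lambda>a b. idop a b - adj V E W K a b)"
    unfolding posS_def
  proof
    fix \<psi> :: "basis \<Rightarrow> complex"
    let ?\<sigma> = "sapp V E (\<rho>\<psi> \<psi>)"
    have e1: "form (B W) (\<lambda>a b. idop a b - adj V E W K a b) \<psi> = form (B W) idop \<psi> - tr2 (B W) K ?\<sigma>"
      by (simp only: form_minus formadj)
    have e2: "form (B W) idop \<psi> = (\<Sum>x\<in>B W. \<rho>\<psi> \<psi> x x)"
      unfolding form_idop[OF finB] \<rho>\<psi>_def by (rule sum.cong[OF refl]) (rule mult.commute)
    have e3: "tr2 (B W) K ?\<sigma> = (\<Sum>x\<in>B W. ?\<sigma> x x) - tr2 (B W) (\<lambda>a b. idop a b - K a b) ?\<sigma>"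
    proof -
      have "tr2 (B W) (\<lambda>a b. idop a b - K a b) ?\<sigma> = (\<Sum>x\<in>B W. ?\<sigma> x x) - tr2 (B W) K ?\<sigma>"
        unfolding tr2_minus tr2_idop[OF finB] by (rule refl)
      thus ?thesis by (simp only: diff_diff_eq2 diff_add_cancel add_diff_cancel_left')
    qed
    have "form (B W) (\<lambda>a b. idop a b - adj V E W K a b) \<psi> =
        ((\<Sum>x\<in>B W. \<rho>\<psi> \<psi> x x) - (\<Sum>x\<in>B W. ?\<sigma> x x)) + tr2 (B W) (\<lambda>a b. idop a b - K a b) ?\<sigma>"
      unfolding e1 e2 e3 by (rule cplx_aux)
    moreover have "Im (\<Sum>x\<in>B W. \<rho>\<psi> \<psi> x x) = 0"
    proof -
      have "Im (\<Sum>x\<in>B W. \<rho>\<psi> \<psi> x x) = 0 \<and> 0 \<le> Re (\<Sum>x\<in>B W. \<rho>\<psi> \<psi> x x)"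
        by (rule nonneg_sum) (simp only: \<rho>\<psi>_def cnj_mult_self2)
      thus ?thesis by (rule conjunct1)
    qed
    moreover have "Im (\<Sum>x\<in>B W. ?\<sigma> x x) = 0"
    proof -
      have "Im (\<Sum>x\<in>B W. ?\<sigma> x x) = 0 \<and> 0 \<le> Re (\<Sum>x\<in>B W. ?\<sigma> x x)"
        by (rule nonneg_sum) (rule posS_diag[OF finB possig])
      thus ?thesis by (rule conjunct1)
    qed
    moreover have "Re (\<Sum>x\<in>B W. ?\<sigma> x x) \<le> Re (\<Sum>x\<in>B W. \<rho>\<psi> \<psi> x x)"
      by (rule sapp_trace_le[OF assms(3,1,2) pos\<rho>])
    moreover have "Im (tr2 (B W) (\<lambda>a b. idop a b - K a b) ?\<sigma>) = 0 \<and> 0 \<le> Re (tr2 (B W) (\<lambda>a b. idop a b - K a b) ?\<sigma>)"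
      by (rule psd_trace[OF finB K2 possig])
    ultimately show "Im (form (B W) (\<lambda>a b. idop a b - adj V E W K a b) \<psi>) = 0 \<and>
        0 \<le> Re (form (B W) (\<lambda>a b. idop a b - adj V E W K a b) \<psi>)"
      by (rule combine_aux)
  qed
  show ?thesis unfolding effect_def positive_iff using P1 P2 by (rule conjI)
qed


lemma ext_ext:
  assumes "W \<subseteq> W'"
  shows "ext W' (ext W N) = ext W N"
proof (intro ext)
  fix a b
  have r: "\<And>a. restr (restr a W') W = restr a W" using assms by (auto simp: restr_def fun_eq_iff)
  have c: "((\<forall>q. q \<notin> W' \<longrightarrow> a q = b q) \<and> (\<forall>q. q \<notin> W \<longrightarrow> restr a W' q = restr b W' q)) \<longleftrightarrow> (\<forall>q. q \<notin> W \<longrightarrow> a q = b q)"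
    using assms by (auto simp: restr_def)
  show "ext W' (ext W N) a b = ext W N a b"
    unfolding ext_def r using c by auto
qed

lemma ext_idop: "ext W idop = idop"
proof (intro ext)
  fix a b
  show "ext W idop a b = idop a b"
  proof (cases "\<forall>q. q \<notin> W \<longrightarrow> a q = b q")
    case True
    have "(restr a W = restr b W) = (a = b)"
    proof
      assume "restr a W = restr b W"
      thus "a = b" using True unfolding restr_def fun_eq_iff by metis
    qed simp
    thus ?thesis using True by (simp add: ext_def idop_def)
  next
    case False
    hence "a \<noteq> b" by auto
    thus ?thesis using False by (simp add: ext_def idop_def)
  qed
qed

lemma ext_idop_minus: "ext W (\<lambda>a b. idop a b - K a b) = (\<lambda>a b. idop a b - ext W K a b)"
proof (intro ext)
  fix a b
  have "ext W idop a b = idop a b" by (simp add: ext_idop)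
  thus "ext W (\<lambda>a b. idop a b - K a b) a b = idop a b - ext W K a b"
    unfolding ext_def by (cases "\<forall>q. q \<notin> W \<longrightarrow> a q = b q") auto
qed

lemma effect_ext:
  assumes "W \<subseteq> W'" "finite W'" "effect W N"
  shows "effect W' (ext W N)"
proof -
  have 1: "posS (B W) N" using assms(3) unfolding effect_def positive_iff by (rule conjunct1)
  have 2: "posS (B W) (\<lambda>a b. idop a b - N a b)" using assms(3) unfolding effect_def positive_iff by (rule conjunct2)
  have "posS (B W') (ext W N)" by (rule pos_ext[OF assms(1,2) 1])
  moreover have "posS (B W') (ext W (\<lambda>a b. idop a b - N a b))" by (rule pos_ext[OF assms(1,2) 2])
  ultimately show ?thesis unfolding effect_def positive_iff ext_idop_minus by (rule conjI)
qed

lemma expv_tr2: "expv X W M \<rho> = Re (tr2 (B X) (ext W M) \<rho>)"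
  by (simp add: expv_def trace_mult)

lemma adj_expv:
  assumes "finite X" "finite W'" "V \<subseteq> W'" "W' \<subseteq> X" "superop_on V E"
  shows "expv X W' (adj V E W' K) \<rho> = expv X W' K (sapp V E \<rho>)"
proof -
  have "tr2 (B X) (ext W' K) (sapp V E \<rho>) = tr2 (B W') K (ptr X W' (sapp V E \<rho>))"
    by (rule tr2_ext[OF assms(4,1)])
  also have "ptr X W' (sapp V E \<rho>) = sapp V E (ptr X W' \<rho>)"
    unfolding fun_eq_iff using ptr_sapp[OF assms(5,3,1)] by blast
  also have "tr2 (B W') K (sapp V E (ptr X W' \<rho>)) = tr2 (B W') (adj V E W' K) (ptr X W' \<rho>)"
    by (rule adj_tr[OF assms(2,3,5)])
  also have "\<dots> = tr2 (B X) (ext W' (adj V E W' K)) \<rho>"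
    by (rule tr2_ext[symmetric, OF assms(4,1)])
  finally show ?thesis unfolding expv_tr2 by simp
qed

lemma expv_idop_minus:
  assumes "finite X"
  shows "expv X W (\<lambda>a b. idop a b - K a b) \<rho> = trr X \<rho> - expv X W K \<rho>"
  unfolding expv_tr2 ext_idop_minus tr2_minus tr2_idop[OF finite_B[OF assms]] trr_def trace_def
  by simp

lemma expv_idop:
  assumes "finite X"
  shows "expv X W idop \<rho> = trr X \<rho>"
  unfolding expv_tr2 ext_idop tr2_idop[OF finite_B[OF assms]] trr_def trace_def by simp

lemma expv_nonneg:
  assumes "finite X" "W \<subseteq> X" "effect W N" "posS (B X) \<sigma>"
  shows "0 \<le> expv X W N \<sigma>"
proof -
  have 1: "posS (B W) N" using assms(3) unfolding effect_def positive_iff by (rule conjunct1)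
  have "Im (tr2 (B X) (ext W N) \<sigma>) = 0 \<and> 0 \<le> Re (tr2 (B X) (ext W N) \<sigma>)"
    by (rule psd_trace[OF finite_B[OF assms(1)] pos_ext[OF assms(2,1) 1] assms(4)])
  thus ?thesis unfolding expv_tr2 by (rule conjunct2)
qed

lemma effect_idop_minus: "effect W K \<Longrightarrow> effect W (\<lambda>a b. idop a b - K a b)"
  unfolding effect_def by simp

lemma effect_idop: "finite W \<Longrightarrow> effect W idop"
  unfolding effect_def positive_iff
proof
  assume "finite W"
  show "posS (B W) idop" by (rule posS_idop[OF finite_B[OF \<open>finite W\<close>]])
  show "posS (B W) (\<lambda>a b. idop a b - idop a b)" by (simp add: posS_def form_def)
qed


lemma key_T:
  assumes V: "finite V" and E: "E \<in> DProg V" and le: "le_T_e V E F"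
    and W: "finite W" and N: "effect W N" and X: "finite X" "V \<union> W \<subseteq> X" and \<rho>: "density X \<rho>"
  shows "expv X W N (sapp V E \<rho>) \<le> expv X W N (sapp V F \<rho>)"
proof -
  define W' where "W' = V \<union> W"
  define N' where "N' = ext W N"
  define M where "M = adj V E W' N'"
  have fW': "finite W'" using V W by (simp add: W'_def)
  have VW': "V \<subseteq> W'" and WW': "W \<subseteq> W'" by (auto simp: W'_def)
  have W'X: "W' \<subseteq> X" using X by (simp add: W'_def)
  have soE: "superop_on V E" by (rule DProg_D(1)[OF E])
  have effN': "effect W' N'" unfolding N'_def by (rule effect_ext[OF WW' fW' N])
  have effM: "effect W' M" unfolding M_def by (rule adj_effect[OF fW' VW' E effN'])
  have eqN: "\<And>\<sigma> Y. expv Y W' N' \<sigma> = expv Y W N \<sigma>" unfolding N'_def expv_def ext_ext[OF WW'] by simp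
  have satE: "sat_tot_e V E W' M N'"
    unfolding sat_tot_e_def
  proof (intro allI impI)
    fix Y \<sigma> assume h: "finite Y \<and> V \<union> W' \<subseteq> Y \<and> density Y \<sigma>"
    have "expv Y W' M \<sigma> = expv Y W' N' (sapp V E \<sigma>)" unfolding M_def
      by (rule adj_expv) (use h VW' soE fW' in auto)
    thus "expv Y W' M \<sigma> \<le> expv Y W' N' (sapp V E \<sigma>)" by simp
  qed
  have satF: "sat_tot_e V F W' M N'" using le fW' effM effN' satE unfolding le_T_e_def by blast
  have "expv X W' M \<rho> \<le> expv X W' N' (sapp V F \<rho>)"
    using satF X \<rho> VW' W'X unfolding sat_tot_e_def by blast
  moreover have "expv X W' M \<rho> = expv X W' N' (sapp V E \<rho>)"
    unfolding M_def by (rule adj_expv[OF X(1) fW' VW' W'X soE])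
  ultimately show ?thesis using eqN by simp
qed

lemma key_P:
  assumes V: "finite V" and E: "E \<in> DProg V" and le: "le_P_e V E F"
    and W: "finite W" and N: "effect W N" and X: "finite X" "V \<union> W \<subseteq> X" and \<rho>: "density X \<rho>"
  shows "expv X W N (sapp V E \<rho>) + trr X \<rho> - trr X (sapp V E \<rho>) \<le> expv X W N (sapp V F \<rho>) + trr X \<rho> - trr X (sapp V F \<rho>)"
proof -
  define W' where "W' = V \<union> W"
  define N' where "N' = ext W N"
  define M where "M = (\<lambda>a b. idop a b - adj V E W' (\<lambda>a b. idop a b - N' a b) a b)"
  have fW': "finite W'" using V W by (simp add: W'_def)
  have VW': "V \<subseteq> W'" and WW': "W \<subseteq> W'" by (auto simp: W'_def)
  have W'X: "W' \<subseteq> X" using X by (simp add: W'_def)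
  have soE: "superop_on V E" by (rule DProg_D(1)[OF E])
  have effN': "effect W' N'" unfolding N'_def by (rule effect_ext[OF WW' fW' N])
  have effM: "effect W' M" unfolding M_def
    by (rule effect_idop_minus, rule adj_effect[OF fW' VW' E], rule effect_idop_minus[OF effN'])
  have eqN: "\<And>\<sigma> Y. expv Y W' N' \<sigma> = expv Y W N \<sigma>" unfolding N'_def expv_def ext_ext[OF WW'] by simp
  have Meq: "expv Y W' M \<sigma> = expv Y W' N' (sapp V E \<sigma>) + trr Y \<sigma> - trr Y (sapp V E \<sigma>)"
    if "finite Y" "W' \<subseteq> Y" for Y \<sigma>
  proof -
    have "expv Y W' M \<sigma> = trr Y \<sigma> - expv Y W' (adj V E W' (\<lambda>a b. idop a b - N' a b)) \<sigma>"
      unfolding M_def by (rule expv_idop_minus[OF that(1)])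
    also have "expv Y W' (adj V E W' (\<lambda>a b. idop a b - N' a b)) \<sigma> = expv Y W' (\<lambda>a b. idop a b - N' a b) (sapp V E \<sigma>)"
      by (rule adj_expv[OF that(1) fW' VW' that(2) soE])
    also have "\<dots> = trr Y (sapp V E \<sigma>) - expv Y W' N' (sapp V E \<sigma>)"
      by (rule expv_idop_minus[OF that(1)])
    finally show ?thesis by simp
  qed
  have satE: "sat_par_e V E W' M N'"
    unfolding sat_par_e_def
  proof (intro allI impI)
    fix Y \<sigma> assume h: "finite Y \<and> V \<union> W' \<subseteq> Y \<and> density Y \<sigma>"
    thus "expv Y W' M \<sigma> \<le> expv Y W' N' (sapp V E \<sigma>) + trr Y \<sigma> - trr Y (sapp V E \<sigma>)"
      using Meq by simp
  qed
  have satF: "sat_par_e V F W' M N'" using le fW' effM effN' satE unfolding le_P_e_def by blast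
  have "expv X W' M \<rho> \<le> expv X W' N' (sapp V F \<rho>) + trr X \<rho> - trr X (sapp V F \<rho>)"
    using satF X \<rho> VW' W'X unfolding sat_par_e_def by blast
  moreover have "expv X W' M \<rho> = expv X W' N' (sapp V E \<rho>) + trr X \<rho> - trr X (sapp V E \<rho>)"
    by (rule Meq[OF X(1) W'X])
  ultimately show ?thesis using eqN by simp
qed

lemma trace_T:
  assumes V: "finite V" and E: "E \<in> DProg V" and le: "le_T_e V E F"
    and X: "finite X" "V \<subseteq> X" and \<rho>: "density X \<rho>"
  shows "trr X (sapp V E \<rho>) \<le> trr X (sapp V F \<rho>)"
  using key_T[OF V E le finite.emptyI effect_idop[OF finite.emptyI] X(1) _ \<rho>] X
  by (simp add: expv_idop[OF X(1)])

lemma sing_T: "sat_tot_s V {G} W {M} {N} = sat_tot_e V G W M N"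
  by (simp add: sat_tot_s_def sat_tot_e_def Exp_dem_def)

lemma sing_P: "sat_par_s V {G} W {M} {N} = sat_par_e V G W M N"
  by (simp add: sat_par_s_def sat_par_e_def Exp_dem_def)

theorem corollary5p2:
  fixes V :: "qvar set" and E F :: superop
  assumes "finite V" and "E \<in> DProg V" and "F \<in> DProg V"
  shows "(le_T_s V {E} {F} \<longleftrightarrow> le_T_e V E F) \<and> (le_P_s V {E} {F} \<longleftrightarrow> le_P_e V E F)"
proof -
  have pos\<sigma>: "posS (B X) (sapp V E \<rho>)" if "finite X" "V \<subseteq> X" "density X \<rho>" for X \<rho>
    by (rule DProg_D(2)[OF assms(2) that(1,2)]) (use that(3) in \<open>simp add: density_def positive_iff\<close>)
  have bdd: "bdd_below ((\<lambda>N. expv X W N (sapp V E \<rho>)) ` \<Psi>)"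
    if "finite X" "V \<union> W \<subseteq> X" "density X \<rho>" "\<Psi> \<subseteq> Collect (effect W)" for X W \<rho> \<Psi>
  proof (rule bdd_belowI2)
    fix N assume "N \<in> \<Psi>"
    thus "0 \<le> expv X W N (sapp V E \<rho>)"
      using that by (intro expv_nonneg pos\<sigma>) auto
  qed
  have T: "le_T_s V {E} {F} \<longleftrightarrow> le_T_e V E F"
  proof
    assume L: "le_T_s V {E} {F}"
    show "le_T_e V E F"
      unfolding le_T_e_def
    proof (intro allI impI)
      fix W M N assume h: "finite W \<and> effect W M \<and> effect W N" and s: "sat_tot_e V E W M N"
      have "sat_tot_s V {E} W {M} {N}" using s by (simp add: sing_T)
      hence "sat_tot_s V {F} W {M} {N}" using L h unfolding le_T_s_def by blast
      thus "sat_tot_e V F W M N" by (simp add: sing_T)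
    qed
  next
    assume R: "le_T_e V E F"
    show "le_T_s V {E} {F}"
      unfolding le_T_s_def
    proof (intro allI impI)
      fix W \<Theta> \<Psi> assume h: "finite W \<and> \<Theta> \<subseteq> Collect (effect W) \<and> \<Psi> \<subseteq> Collect (effect W)"
        and sE: "sat_tot_s V {E} W \<Theta> \<Psi>"
      show "sat_tot_s V {F} W \<Theta> \<Psi>"
        unfolding sat_tot_s_def
      proof (intro allI impI)
        fix X \<rho> assume hx: "finite X \<and> V \<union> W \<subseteq> X \<and> density X \<rho>"
        have a: "Exp_dem X W \<rho> \<Theta> \<le> Exp_dem X W (sapp V E \<rho>) \<Psi>"
          using sE hx unfolding sat_tot_s_def by auto
        have "Exp_dem X W \<rho> \<Theta> \<le> Exp_dem X W (sapp V F \<rho>) \<Psi>"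
        proof (cases "\<Psi> = {}")
          case True
          thus ?thesis using a trace_T[OF assms(1,2) R, of X \<rho>] hx by (simp add: Exp_dem_def)
        next
          case False
          have "Exp_dem X W \<rho> \<Theta> \<le> expv X W N (sapp V F \<rho>)" if N: "N \<in> \<Psi>" for N
          proof -
            have "Exp_dem X W \<rho> \<Theta> \<le> (INF N\<in>\<Psi>. expv X W N (sapp V E \<rho>))"
              using a False by (simp add: Exp_dem_def)
            also have "\<dots> \<le> expv X W N (sapp V E \<rho>)"
              by (rule cINF_lower[OF bdd N]) (use hx h in auto)
            also have "\<dots> \<le> expv X W N (sapp V F \<rho>)"
              by (rule key_T[OF assms(1,2) R]) (use hx h N in auto)
            finally show ?thesis .
          qed
          hence "Exp_dem X W \<rho> \<Theta> \<le> (INF N\<in>\<Psi>. expv X W N (sapp V F \<rho>))"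
            using False by (intro cINF_greatest) auto
          thus ?thesis using False by (simp add: Exp_dem_def)
        qed
        thus "Exp_dem X W \<rho> \<Theta> \<le> (INF G\<in>{F}. Exp_dem X W (sapp V G \<rho>) \<Psi>)" by simp
      qed
    qed
  qed
  have P: "le_P_s V {E} {F} \<longleftrightarrow> le_P_e V E F"
  proof
    assume L: "le_P_s V {E} {F}"
    show "le_P_e V E F"
      unfolding le_P_e_def
    proof (intro allI impI)
      fix W M N assume h: "finite W \<and> effect W M \<and> effect W N" and s: "sat_par_e V E W M N"
      have "sat_par_s V {E} W {M} {N}" using s by (simp add: sing_P)
      hence "sat_par_s V {F} W {M} {N}" using L h unfolding le_P_s_def by blast
      thus "sat_par_e V F W M N" by (simp add: sing_P)
    qed
  next
    assume R: "le_P_e V E F"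
    show "le_P_s V {E} {F}"
      unfolding le_P_s_def
    proof (intro allI impI)
      fix W \<Theta> \<Psi> assume h: "finite W \<and> \<Theta> \<subseteq> Collect (effect W) \<and> \<Psi> \<subseteq> Collect (effect W)"
        and sE: "sat_par_s V {E} W \<Theta> \<Psi>"
      show "sat_par_s V {F} W \<Theta> \<Psi>"
        unfolding sat_par_s_def
      proof (intro allI impI)
        fix X \<rho> assume hx: "finite X \<and> V \<union> W \<subseteq> X \<and> density X \<rho>"
        have a: "Exp_dem X W \<rho> \<Theta> \<le> Exp_dem X W (sapp V E \<rho>) \<Psi> + trr X \<rho> - trr X (sapp V E \<rho>)"
          using sE hx unfolding sat_par_s_def by auto
        have "Exp_dem X W \<rho> \<Theta> \<le> Exp_dem X W (sapp V F \<rho>) \<Psi> + trr X \<rho> - trr X (sapp V F \<rho>)"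
        proof (cases "\<Psi> = {}")
          case True
          thus ?thesis using a by (simp add: Exp_dem_def)
        next
          case False
          have "Exp_dem X W \<rho> \<Theta> - trr X \<rho> + trr X (sapp V F \<rho>) \<le> expv X W N (sapp V F \<rho>)" if N: "N \<in> \<Psi>" for N
          proof -
            have "Exp_dem X W \<rho> \<Theta> \<le> (INF N\<in>\<Psi>. expv X W N (sapp V E \<rho>)) + trr X \<rho> - trr X (sapp V E \<rho>)"
              using a False by (simp add: Exp_dem_def)
            moreover have "(INF N\<in>\<Psi>. expv X W N (sapp V E \<rho>)) \<le> expv X W N (sapp V E \<rho>)"
              by (rule cINF_lower[OF bdd N]) (use hx h in auto)
            moreover have "expv X W N (sapp V E \<rho>) + trr X \<rho> - trr X (sapp V E \<rho>) \<le> expv X W N (sapp V F \<rho>) + trr X \<rho> - trr X (sapp V F \<rho>)"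
              by (rule key_P[OF assms(1,2) R]) (use hx h N in auto)
            ultimately show ?thesis by linarith
          qed
          hence "Exp_dem X W \<rho> \<Theta> - trr X \<rho> + trr X (sapp V F \<rho>) \<le> (INF N\<in>\<Psi>. expv X W N (sapp V F \<rho>))"
            using False by (intro cINF_greatest) auto
          thus ?thesis using False by (simp add: Exp_dem_def)
        qed
        thus "Exp_dem X W \<rho> \<Theta> \<le> (INF G\<in>{F}. Exp_dem X W (sapp V G \<rho>) \<Psi> + trr X \<rho> - trr X (sapp V G \<rho>))" by simp
      qed
    qed
  qed
  show ?thesis using T P by blast
qed

end
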